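(* Let $T$ be a continuous linear operator on a topological vector space $X$ and let $\mathcal F$ be a block family. Then $T$ is $\mathcal F$-hypercyclic if and only if $T$ is hypercyclic and has the $\mathscr P_{\mathcal F}$ property.
   Context: $\mathbb N$ denotes the nonnegative integers. A Furstenberg family is a nonempty collection $\mathcal F\subseteq\mathcal P(\mathbb N)$ with $\emptyset\notin\mathcal F$ which is hereditarily upward ($A\in\mathcal F$, $A\subseteq B$ imply $B\in\mathcal F$). The block family $b\mathcal F$: $S\in b\mathcal F$ iff there is $F\in\mathcal F$ such that for every finite $R\subseteq F$ there is $n\in\mathbb N$ with $R+n\subseteq S$. A Furstenberg family $\mathcal F$ is called a block family if $b\mathcal F=\mathcal F$. For $x\in X$ and $U\subseteq X$, $N_T(x,U)=\{n\in\mathbb N:T^nx\in U\}$. $T$ is $\mathcal F$-hypercyclic if there is $x\in X$ with $N_T(x,U)\in\mathcal F$ for every nonempty open $U$; $T$ is hypercyclic if some $x$ has dense orbit $\{T^nx:n\in\mathbb N\}$. $T$ has the $\mathscr P_{\mathcal F}$ property if for every nonempty open set $U\subseteq X$ there is $x\in X$ with $N_T(x,U)\in\mathcal F$. *)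

theory Defs
  imports "HOL-Analysis.Analysis"
begin

text \<open>Real topological vector spaces: a topological abelian group with a real vector
  space structure for which scalar multiplication is jointly continuous
  (stated via neighbourhoods, i.e. continuity w.r.t. the product topology).
  (Complex topological vector spaces are in particular real ones.)\<close>
class real_topological_vector_space = topological_ab_group_add + real_vector +
  assumes continuous_scaleR_joint:
    "\<And>a x V. open V \<Longrightarrow> a *\<^sub>R x \<in> V \<Longrightarrow>
       \<exists>A W. open (A :: real set) \<and> open W \<and> a \<in> A \<and> x \<in> W \<and>
         (\<forall>b\<in>A. \<forall>y\<in>W. b *\<^sub>R y \<in> V)"

definition furstenberg_family :: "nat set set \<Rightarrow> bool" where
  "furstenberg_family \<F> \<longleftrightarrow> \<F> \<noteq> {} \<and> {} \<notin> \<F> \<and> (\<forall>A B. A \<in> \<F> \<and> A \<subseteq> B \<longrightarrow> B \<in> \<F>)"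

definition block_fam :: "nat set set \<Rightarrow> nat set set" where
  "block_fam \<F> = {S. \<exists>F\<in>\<F>. \<forall>R. finite R \<and> R \<subseteq> F \<longrightarrow> (\<exists>n. (\<lambda>r. r + n) ` R \<subseteq> S)}"

definition block_family :: "nat set set \<Rightarrow> bool" where
  "block_family \<F> \<longleftrightarrow> furstenberg_family \<F> \<and> block_fam \<F> = \<F>"

definition return_set :: "('a \<Rightarrow> 'a) \<Rightarrow> 'a \<Rightarrow> 'a set \<Rightarrow> nat set" where
  "return_set T x U = {n. (T ^^ n) x \<in> U}"

definition F_hypercyclic :: "nat set set \<Rightarrow> ('a::topological_space \<Rightarrow> 'a) \<Rightarrow> bool" where
  "F_hypercyclic \<F> T \<longleftrightarrow> (\<exists>x. \<forall>U. open U \<and> U \<noteq> {} \<longrightarrow> return_set T x U \<in> \<F>)"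

definition hypercyclic :: "('a::topological_space \<Rightarrow> 'a) \<Rightarrow> bool" where
  "hypercyclic T \<longleftrightarrow> (\<exists>x. closure (range (\<lambda>n. (T ^^ n) x)) = UNIV)"

definition P_F_property :: "nat set set \<Rightarrow> ('a::topological_space \<Rightarrow> 'a) \<Rightarrow> bool" where
  "P_F_property \<F> T \<longleftrightarrow> (\<forall>U. open U \<and> U \<noteq> {} \<longrightarrow> (\<exists>x. return_set T x U \<in> \<F>))"

end

theory Submission
  imports Defs
begin

lemma cont_funpow: "continuous_on UNIV (T :: 'a::topological_space \<Rightarrow> 'a) \<Longrightarrow> continuous_on UNIV (T ^^ n)"
proof (induction n)
  case 0 have "T ^^ 0 = (\<lambda>x. x)" by (simp add: fun_eq_iff)
  then show ?case using continuous_on_id by metis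
next
  case (Suc n)
  then have "continuous_on UNIV (T \<circ> (T ^^ n))"
    by (metis continuous_on_compose continuous_on_subset subset_UNIV)
  then show ?case by simp
qed

theorem mainTheorem4:
  fixes T :: "'a::real_topological_vector_space \<Rightarrow> 'a" and \<F> :: "nat set set"
  assumes "linear T" and "continuous_on UNIV T" and "block_family \<F>"
  shows "F_hypercyclic \<F> T \<longleftrightarrow> hypercyclic T \<and> P_F_property \<F> T"
proof
  assume "F_hypercyclic \<F> T"
  then obtain x where x: "\<And>U. open U \<Longrightarrow> U \<noteq> {} \<Longrightarrow> return_set T x U \<in> \<F>"
    unfolding F_hypercyclic_def by blast
  have ne: "{} \<notin> \<F>" using assms(3) unfolding block_family_def furstenberg_family_def by blast
  have "closure (range (\<lambda>n. (T ^^ n) x)) = UNIV"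
  proof (rule ccontr)
    assume "closure (range (\<lambda>n. (T ^^ n) x)) \<noteq> UNIV"
    then have "open (- closure (range (\<lambda>n. (T ^^ n) x)))" "- closure (range (\<lambda>n. (T ^^ n) x)) \<noteq> {}"
      by auto
    from x[OF this] have "return_set T x (- closure (range (\<lambda>n. (T ^^ n) x))) \<in> \<F>" .
    moreover have "return_set T x (- closure (range (\<lambda>n. (T ^^ n) x))) = {}"
      unfolding return_set_def by (auto intro: closure_subset[THEN subsetD])
    ultimately show False using ne by simp
  qed
  then show "hypercyclic T \<and> P_F_property \<F> T"
    unfolding hypercyclic_def P_F_property_def using x by blast
next
  assume "hypercyclic T \<and> P_F_property \<F> T"
  then obtain x where x: "closure (range (\<lambda>n. (T ^^ n) x)) = UNIV"
    and P: "\<And>U. open U \<Longrightarrow> U \<noteq> {} \<Longrightarrow> \<exists>y. return_set T y U \<in> \<F>"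
    unfolding hypercyclic_def P_F_property_def by blast
  have bf: "block_fam \<F> = \<F>" using assms(3) unfolding block_family_def by blast
  have cont: "\<And>r. continuous_on UNIV (T ^^ r)" using cont_funpow assms(2) by blast
  show "F_hypercyclic \<F> T" unfolding F_hypercyclic_def
  proof (intro exI[of _ x] allI impI)
    fix U :: "'a set" assume U: "open U \<and> U \<noteq> {}"
    then obtain y where y: "return_set T y U \<in> \<F>" using P by blast
    have "return_set T x U \<in> block_fam \<F>"
      unfolding block_fam_def
    proof (intro CollectI bexI[OF _ y] allI impI)
      fix R assume R: "finite R \<and> R \<subseteq> return_set T y U"
      define Ob where "Ob = (\<Inter>r\<in>R. (T ^^ r) -` U)"
      have "open Ob" unfolding Ob_def
        using R U cont by (intro open_INT) (auto intro!: open_vimage)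
      moreover have "y \<in> Ob" using R unfolding Ob_def return_set_def by auto
      ultimately have "range (\<lambda>n. (T ^^ n) x) \<inter> Ob \<noteq> {}"
        using x closure_iff_nhds_not_empty[of y "range (\<lambda>n. (T ^^ n) x)"] by blast
      then obtain n where n: "(T ^^ n) x \<in> Ob" by blast
      have "(\<lambda>r. r + n) ` R \<subseteq> return_set T x U"
      proof
        fix m assume "m \<in> (\<lambda>r. r + n) ` R"
        then obtain r where r: "r \<in> R" "m = r + n" by blast
        then have "(T ^^ r) ((T ^^ n) x) \<in> U" using n unfolding Ob_def by auto
        then show "m \<in> return_set T x U" unfolding return_set_def r(2)
          by (simp add: funpow_add)
      qed
      then show "\<exists>n. (\<lambda>r. r + n) ` R \<subseteq> return_set T x U" by blast
    qed
    then show "return_set T x U \<in> \<F>" using bf by simp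
  qed
qed

end
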